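(* For every integer $k\ge 1$, $$\sum_{n=k}^\infty \frac{B_{n,k}}{4^n}=1,\qquad \sum_{n=k}^\infty B_{n,k}\frac{(-1)^n}{4^n}=(2\sqrt2-3)^k,$$ $$\sum_{n=k}^\infty \frac{A_{n,k+1}}{4^n}=2,\qquad \sum_{n=k}^\infty A_{n,k+1}\frac{(-1)^n}{4^n}=2(\sqrt2-1)(2\sqrt2-3)^k,$$ and moreover $$\sum_{k\ge1}\sum_{n\ge k} \frac{B_{n,k}}{4^{n+k}}=\frac13,\qquad \sum_{k\ge1}\sum_{n\ge k} B_{n,k}\frac{(-1)^n}{4^{n+k}}=\frac{8\sqrt2-13}{41},$$ $$\sum_{k\ge0}\sum_{n\ge k} \frac{A_{n,k+1}}{4^{n+k}}=\frac83,\qquad \sum_{k\ge0}\sum_{n\ge k} A_{n,k+1}\frac{(-1)^n}{4^{n+k}}=\frac{8}{41}(5\sqrt2-3).$$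
   Context: The Catalan triangle numbers are $B_{n,k}=\frac{k}{n}\binom{2n}{n-k}$ for integers $n\ge1$, $1\le k\le n$, and $A_{n,k}=\frac{2k-1}{2n+1}\binom{2n+1}{n+1-k}$ for integers $n\ge 0$, $1\le k\le n+1$. *)

theory Defs
  imports Complex_Main
begin

text \<open>Catalan triangle numbers, as real numbers (used only for n \<ge> 1, 1 \<le> k \<le> n,
  resp. n \<ge> 0, 1 \<le> k \<le> n+1).\<close>
definition catB :: "nat \<Rightarrow> nat \<Rightarrow> real" where
  "catB n k = real k / real n * real ((2*n) choose (n - k))"

definition catA :: "nat \<Rightarrow> nat \<Rightarrow> real" where
  "catA n k = (2 * real k - 1) / (2 * real n + 1) * real ((2*n+1) choose (n + 1 - k))"

end

theory Submission
  imports Defs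
begin

definition bb :: "nat \<Rightarrow> nat \<Rightarrow> real" where
  "bb n k = (if k = 0 then (if n = 0 then 1 else 0) else if n < k then 0 else catB n k)"

lemma fact2: "(fact (Suc (Suc m)) :: real) = real (m+2) * real (m+1) * fact m"
  by (simp add: fact_Suc algebra_simps)

lemma fact2': "(fact (Suc (Suc m)) :: real) = real (Suc (Suc m)) * real (Suc m) * fact m"
  by (simp only: fact_Suc mult.assoc)

lemma binf: "i \<le> m \<Longrightarrow> i = i' \<Longrightarrow> m - i = d \<Longrightarrow> real (m choose i) = fact m / (fact i' * fact d)"
  by (simp add: binomial_fact)

lemma rec_main:
  "catB (b+j+3) (j+1) = catB (b+j+2) j + 2 * catB (b+j+2) (j+1) + catB (b+j+2) (j+2)"
proof -
  define fb :: real where "fb = fact b"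
  define fq :: real where "fq = fact (b+2*j+2)"
  define Fm :: real where "Fm = fact (2*(b+j+2))"
  have fbp: "fb > 0" "fq > 0" "Fm > 0" unfolding fb_def fq_def Fm_def by auto
  have f0: "(fact (2*(b+j+3))::real) = real (Suc (Suc (2*(b+j+2)))) * real (Suc (2*(b+j+2))) * Fm"
  proof -
    have eq: "2*(b+j+3) = Suc (Suc (2*(b+j+2)))" by simp
    show ?thesis unfolding Fm_def eq by (rule fact2')
  qed
  have f1: "(fact (b+1)::real) = real (Suc b) * fb" unfolding fb_def by (simp only: Suc_eq_plus1[symmetric] fact_Suc)
  have f2: "(fact (b+2)::real) = real (Suc (Suc b)) * real (Suc b) * fb"
  proof -
    have eq: "b+2 = Suc (Suc b)" by simp
    show ?thesis unfolding fb_def eq by (rule fact2')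
  qed
  have f3: "(fact (b+2*j+3)::real) = real (Suc (b+2*j+2)) * fq"
  proof -
    have eq: "b+2*j+3 = Suc (b+2*j+2)" by simp
    show ?thesis unfolding fq_def eq by (rule fact_Suc)
  qed
  have f4: "(fact (b+2*j+4)::real) = real (Suc (Suc (b+2*j+2))) * real (Suc (b+2*j+2)) * fq"
  proof -
    have eq: "b+2*j+4 = Suc (Suc (b+2*j+2))" by simp
    show ?thesis unfolding fq_def eq by (rule fact2')
  qed
  have e1: "real ((2*(b+j+3)) choose (b+j+3-(j+1))) = fact (2*(b+j+3)) / (fact (b+2) * fact (b+2*j+4))"
    by (rule binf) auto
  have e2: "real ((2*(b+j+2)) choose (b+j+2-j)) = Fm / (fact (b+2) * fq)"
    unfolding Fm_def fq_def by (rule binf) auto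
  have e3: "real ((2*(b+j+2)) choose (b+j+2-(j+1))) = Fm / (fact (b+1) * fact (b+2*j+3))"
    unfolding Fm_def by (rule binf) auto
  have e4: "real ((2*(b+j+2)) choose (b+j+2-(j+2))) = Fm / (fb * fact (b+2*j+4))"
    unfolding Fm_def fb_def by (rule binf) auto
  show ?thesis unfolding catB_def e1 e2 e3 e4 f0 f1 f2 f3 f4
    using fbp
    apply (simp add: field_simps del: of_nat_Suc of_nat_add of_nat_mult)
    apply (simp only: of_nat_add of_nat_mult of_nat_numeral of_nat_1 of_nat_Suc)
    apply (simp add: algebra_simps)
    done
qed

lemma catB_diag: "k \<ge> 1 \<Longrightarrow> catB k k = 1"
  by (simp add: catB_def)

lemma bb_eq: "k \<le> n \<Longrightarrow> 1 \<le> n \<Longrightarrow> bb n k = catB n k"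
  by (simp add: bb_def catB_def)

lemma bb_zero: "n < k \<Longrightarrow> bb n k = 0"
  by (simp add: bb_def)

lemma bb_nonneg: "bb n k \<ge> 0"
  by (simp add: bb_def catB_def)

lemma bb_diag: "bb n n = 1"
  by (simp add: bb_def catB_def)

lemma rec_a0: "catB (j+2) (j+1) = catB (j+1) j + 2"
proof -
  have "real ((2*(j+2)) choose (j+2-(j+1))) = real (2*j+4)" by simp
  moreover have "real ((2*(j+1)) choose (j+1-j)) = real (2*j+2)" by simp
  ultimately show ?thesis unfolding catB_def by (simp add: field_simps)
qed

lemma bb_rec: assumes "k \<ge> 1" shows "bb (Suc n) k = bb n (k-1) + 2 * bb n k + bb n (k+1)"
proof (cases "Suc n < k")
  case True then show ?thesis by (simp add: bb_zero)
next
  case False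
  show ?thesis
  proof (cases "Suc n = k")
    case True
    then have "k - 1 = n" "n < k" "n < k+1" by auto
    then show ?thesis using True by (simp add: bb_zero bb_diag)
  next
    case False2: False
    with False have "k \<le> n" by simp
    then obtain a where n: "n = a + k" by (metis add.commute le_add_diff_inverse)
    obtain j where k: "k = Suc j" using assms by (cases k) auto
    show ?thesis
    proof (cases a)
      case 0
      have "bb (Suc n) k = catB (j+2) (j+1)" using n k 0 by (simp add: bb_eq)
      moreover have "bb n (k-1) = catB (j+1) j" using n k 0 by (simp add: bb_eq)
      moreover have "bb n k = 1" using n 0 by (simp add: bb_diag)
      moreover have "bb n (k+1) = 0" using n 0 by (simp add: bb_zero)
      ultimately show ?thesis using rec_a0[of j] by simp
    next
      case (Suc b)
      have eqs: "Suc n = b+j+3" "k = j+1" using n k Suc by simp_all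
      have "bb (Suc n) k = bb (b+j+3) (j+1)" by (simp only: eqs)
      also have "\<dots> = catB (b+j+3) (j+1)" by (rule bb_eq) auto
      finally have "bb (Suc n) k = catB (b+j+3) (j+1)" .
      moreover have "bb n (k-1) = catB (b+j+2) j" using n k Suc by (simp add: bb_eq)
      moreover have "bb n k = catB (b+j+2) (j+1)" using n k Suc by (simp add: bb_eq)
      moreover have "bb n (k+1) = catB (b+j+2) (j+2)" using n k Suc by (simp add: bb_eq)
      ultimately show ?thesis using rec_main[of b j] by simp
    qed
  qed
qed

lemma catA_main:
  "catA (b+k+1) (k+1) = catB (b+k+1) k + catB (b+k+1) (k+1)"
proof -
  define fb :: real where "fb = fact b"
  define fq :: real where "fq = fact (b+2*k+1)"
  define Fm :: real where "Fm = fact (2*(b+k+1))"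
  have fbp: "fb > 0" "fq > 0" "Fm > 0" unfolding fb_def fq_def Fm_def by auto
  have f0: "(fact (2*(b+k+1)+1)::real) = real (Suc (2*(b+k+1))) * Fm"
    unfolding Fm_def by (simp only: Suc_eq_plus1[symmetric] fact_Suc)
  have f1: "(fact (b+1)::real) = real (Suc b) * fb" unfolding fb_def by (simp only: Suc_eq_plus1[symmetric] fact_Suc)
  have f3: "(fact (b+2*k+2)::real) = real (Suc (b+2*k+1)) * fq"
  proof -
    have eq: "b+2*k+2 = Suc (b+2*k+1)" by simp
    show ?thesis unfolding fq_def eq by (rule fact_Suc)
  qed
  have e1: "real ((2*(b+k+1)+1) choose (b+k+1+1-(k+1))) = fact (2*(b+k+1)+1) / (fact (b+1) * fact (b+2*k+2))"
    by (rule binf) auto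
  have e2: "real ((2*(b+k+1)) choose (b+k+1-k)) = Fm / (fact (b+1) * fq)"
    unfolding Fm_def fq_def by (rule binf) auto
  have e3: "real ((2*(b+k+1)) choose (b+k+1-(k+1))) = Fm / (fb * fact (b+2*k+2))"
    unfolding Fm_def fb_def by (rule binf) auto
  have ee: "real (2*(b+k+1)+1) = 2 * real (b+k+1) + 1" by simp
  show ?thesis unfolding catA_def catB_def e1 e2 e3 f0 f1 f3 ee[symmetric]
    using fbp
    apply (simp add: field_simps del: of_nat_Suc of_nat_add of_nat_mult)
    apply (simp only: of_nat_add of_nat_mult of_nat_numeral of_nat_1 of_nat_Suc)
    apply (simp add: algebra_simps)
    done
qed

lemma catA_k0: "catA (Suc m) 1 = catB (Suc m) 1"
proof -
  define g :: real where "g = fact m"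
  define F :: real where "F = fact (2*Suc m)"
  have gp: "g > 0" "F > 0" unfolding g_def F_def by auto
  have e1: "real ((2*Suc m+1) choose (Suc m + 1 - 1)) = fact (2*Suc m+1) / (fact (Suc m) * fact (m+2))"
    by (rule binf) auto
  have e2: "real ((2*Suc m) choose (Suc m - 1)) = F / (g * fact (m+2))"
    unfolding F_def g_def by (rule binf) auto
  have f1: "(fact (2*Suc m+1)::real) = real (Suc (2*Suc m)) * F"
    unfolding F_def by (simp only: Suc_eq_plus1[symmetric] fact_Suc)
  have f2: "(fact (Suc m)::real) = real (Suc m) * g" unfolding g_def by (rule fact_Suc)
  have f3: "(fact (m+2)::real) = real (Suc (Suc m)) * real (Suc m) * g"
  proof -
    have eq: "m+2 = Suc (Suc m)" by simp
    show ?thesis unfolding g_def eq by (rule fact2')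
  qed
  have pp: "2 * real (Suc m) + 1 \<noteq> 0" by (simp del: of_nat_Suc)
  show ?thesis unfolding catA_def catB_def e1 e2 f1 f2 f3 using gp pp
    apply (simp add: field_simps del: of_nat_Suc of_nat_add of_nat_mult)
    apply (simp only: of_nat_add of_nat_mult of_nat_numeral of_nat_1 of_nat_Suc)
    apply (simp add: algebra_simps)
    apply (subst divide_eq_eq)
    apply (subst if_P)
     apply (rule not_sym, rule less_imp_neq)
     apply (intro add_pos_nonneg mult_pos_pos mult_nonneg_nonneg; simp)
    apply (simp add: algebra_simps)
    done
qed

lemma catA_bb: assumes "k \<le> n" shows "catA n (k+1) = bb n k + bb n (k+1)"
proof -
  obtain a where n: "n = a + k" using assms by (metis add.commute le_add_diff_inverse)
  show ?thesis
  proof (cases a)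
    case 0
    then show ?thesis using n by (simp add: catA_def bb_diag bb_zero)
  next
    case (Suc b)
    show ?thesis
    proof (cases k)
      case 0
      then show ?thesis using n Suc catA_k0[of b] by (simp add: bb_eq bb_def)
    next
      case (Suc j)
      then show ?thesis using n \<open>a = Suc b\<close> catA_main[of b k] by (simp add: bb_eq)
    qed
  qed
qed

definition cc :: "nat \<Rightarrow> real" where "cc N = real ((2*N) choose N) / 4^N"

lemma cc_Suc: "cc (Suc N) = cc N * (2 * real N + 1) / (2 * real N + 2)"
proof -
  define g :: real where "g = fact N"
  define F :: real where "F = fact (2*N)"
  have gp: "g > 0" "F > 0" unfolding g_def F_def by auto
  have e1: "real ((2*Suc N) choose (Suc N)) = fact (2*Suc N) / (fact (Suc N) * fact (Suc N))"
    by (rule binf) auto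
  have e2: "real ((2*N) choose N) = F / (g * g)"
    unfolding F_def g_def by (rule binf) auto
  have f1: "(fact (Suc N)::real) = real (Suc N) * g" unfolding g_def by (rule fact_Suc)
  have f2: "(fact (2*Suc N)::real) = real (Suc (Suc (2*N))) * real (Suc (2*N)) * F"
  proof -
    have eq: "2*Suc N = Suc (Suc (2*N))" by simp
    show ?thesis unfolding F_def eq by (rule fact2')
  qed
  show ?thesis unfolding cc_def e1 e2 f1 f2 using gp
    apply (simp add: field_simps del: of_nat_Suc of_nat_add of_nat_mult)
    apply (simp only: of_nat_add of_nat_mult of_nat_numeral of_nat_1 of_nat_Suc)
    apply (simp add: algebra_simps)
    apply (subst eq_divide_eq)
    apply (subst if_P)
     apply (rule not_sym, rule less_imp_neq)
     apply (intro add_pos_nonneg mult_pos_pos mult_nonneg_nonneg; simp)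
    apply (simp add: algebra_simps)
    done
qed

lemma catB1: "catB (Suc N) 1 = real ((2*Suc N) choose (Suc N)) / (real N + 2)"
proof -
  define g :: real where "g = fact N"
  define F :: real where "F = fact (2*Suc N)"
  have gp: "g > 0" "F > 0" unfolding g_def F_def by auto
  have e1: "real ((2*Suc N) choose (Suc N)) = F / (fact (Suc N) * fact (Suc N))"
    unfolding F_def by (rule binf) auto
  have e2: "real ((2*Suc N) choose (Suc N - 1)) = F / (g * fact (Suc (Suc N)))"
    unfolding F_def g_def by (rule binf) auto
  have f1: "(fact (Suc N)::real) = real (Suc N) * g" unfolding g_def by (rule fact_Suc)
  have f2: "(fact (Suc (Suc N))::real) = real (Suc (Suc N)) * real (Suc N) * g"
    unfolding g_def by (rule fact2')
  have pp: "real N + 2 \<noteq> 0" by simp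
  show ?thesis unfolding catB_def e1 e2 f1 f2 using gp pp
    apply (simp add: field_simps del: of_nat_Suc of_nat_add of_nat_mult)
    apply (simp only: of_nat_add of_nat_mult of_nat_numeral of_nat_1 of_nat_Suc)
    apply (simp add: algebra_simps)
    apply (subst eq_divide_eq)
    apply (subst if_P)
     apply (rule not_sym, rule less_imp_neq)
     apply (intro add_pos_nonneg mult_pos_pos mult_nonneg_nonneg; simp)
    apply (simp add: algebra_simps)
    done
qed

lemma cat_term: "bb (Suc N) 1 / 4^(Suc N) = 2 * cc (Suc N) - 2 * cc (Suc (Suc N))"
proof -
  have "bb (Suc N) 1 = catB (Suc N) 1" by (rule bb_eq) auto
  moreover have "catB (Suc N) 1 / 4^(Suc N) = cc (Suc N) / (real N + 2)"
    unfolding catB1 cc_def by (simp only: divide_divide_eq_left mult.commute)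
  ultimately have "bb (Suc N) 1 / 4^(Suc N) = cc (Suc N) / (real N + 2)" by simp
  also have "\<dots> = 2 * cc (Suc N) - 2 * cc (Suc (Suc N))"
    unfolding cc_Suc[of "Suc N"] by (simp add: field_simps)
  finally show ?thesis .
qed

lemma cat_partial: "(\<Sum>n<Suc N. bb n 1 / 4^n) = 1 - 2 * cc (Suc N)"
proof (induction N)
  case 0
  then show ?case by (simp add: bb_def cc_def)
next
  case (Suc N)
  then show ?case using cat_term[of N] by simp
qed

lemma cc_nonneg: "cc N \<ge> 0" by (simp add: cc_def)

lemma frac_helper: "(y::real) > 0 \<Longrightarrow> c > 0 \<Longrightarrow> x * c \<le> y \<Longrightarrow> x / y \<le> 1 / c"
  by (simp add: field_simps)

lemma cc_sq: "cc N ^ 2 \<le> 1 / (real N + 1)"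
proof (induction N)
  case 0
  then show ?case by (simp add: cc_def)
next
  case (Suc N)
  have "cc (Suc N) ^ 2 = cc N ^ 2 * ((2 * real N + 1) / (2 * real N + 2))^2"
    by (simp add: cc_Suc power_mult_distrib power_divide)
  also have "\<dots> \<le> 1 / (real N + 1) * ((2 * real N + 1) / (2 * real N + 2))^2"
    by (rule mult_right_mono[OF Suc]) simp
  also have "\<dots> \<le> 1 / (real (Suc N) + 1)"
  proof -
    have ineq: "(2 * real N + 1)^2 * (real N + 2) \<le> (real N + 1) * (2 * real N + 2)^2"
      by (simp add: power2_eq_square algebra_simps)
    have "1 / (real N + 1) * ((2 * real N + 1) / (2 * real N + 2))^2
        = (2 * real N + 1)^2 / ((real N + 1) * (2 * real N + 2)^2)" by (simp add: power_divide)
    also have "\<dots> \<le> 1 / (real N + 2)"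
      by (rule frac_helper[OF _ _ ineq]) (simp_all add: add_pos_nonneg)
    finally show ?thesis by (simp add: add.commute)
  qed
  finally show ?case .
qed

lemma cc_lim: "cc \<longlonglongrightarrow> 0"
proof -
  have lim1: "(\<lambda>N. 1 / (real N + 1)) \<longlonglongrightarrow> 0"
    using LIMSEQ_inverse_real_of_nat by (simp add: inverse_eq_divide add.commute)
  have "(\<lambda>N. cc N ^ 2) \<longlonglongrightarrow> 0"
    by (rule tendsto_sandwich[OF always_eventually always_eventually tendsto_const lim1])
       (use cc_sq in auto)
  then have "(\<lambda>N. sqrt (cc N ^ 2)) \<longlonglongrightarrow> sqrt 0" by (rule tendsto_real_sqrt)
  then show ?thesis using cc_nonneg by simp
qed

lemma cat_sums: "(\<lambda>n. bb n 1 * (1/4)^n) sums 1"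
proof -
  have "(\<lambda>N. \<Sum>n<Suc N. bb n 1 / 4^n) \<longlonglongrightarrow> 1 - 2 * 0"
    unfolding cat_partial by (intro tendsto_intros) (rule LIMSEQ_Suc[OF cc_lim])
  then have "(\<lambda>N. \<Sum>n<Suc N. bb n 1 / 4^n) \<longlonglongrightarrow> 1" by simp
  then have "(\<lambda>N. \<Sum>n<N. bb n 1 / 4^n) \<longlonglongrightarrow> 1"
    by (simp only: filterlim_sequentially_Suc[where f="\<lambda>N. \<Sum>n<N. bb n 1 / 4^n"])
  then show ?thesis unfolding sums_def by (simp add: power_divide)
qed

lemma bb0_sums: "(\<lambda>n. bb n 0 * x^n) sums 1"
proof -
  have "(\<lambda>n. bb n 0 * x^n) = (\<lambda>n. if n = 0 then (\<lambda>_. 1::real) n else 0)" by (auto simp: bb_def fun_eq_iff)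
  then show ?thesis using sums_single[of 0 "\<lambda>_. 1::real"] by simp
qed

lemma step_sums:
  assumes x: "x \<noteq> 0" and k: "k \<ge> 1" and P: "(\<lambda>n. bb n (k-1) * x^n) sums P"
    and Q: "(\<lambda>n. bb n k * x^n) sums Q"
  shows "(\<lambda>n. bb n (k+1) * x^n) sums (Q/x - 2*Q - P)"
proof -
  have "(\<lambda>n. bb (Suc n) k * x^(Suc n)) sums Q"
    using Q sums_Suc_iff[of "\<lambda>n. bb n k * x^n" Q] bb_zero[of 0 k] k by simp
  then have a: "(\<lambda>n. bb (Suc n) k * x^(Suc n) / x) sums (Q/x)" by (rule sums_divide)
  have b: "(\<lambda>n. 2 * (bb n k * x^n)) sums (2*Q)" by (rule sums_mult[OF Q])
  have "(\<lambda>n. bb (Suc n) k * x^(Suc n) / x - 2 * (bb n k * x^n) - bb n (k-1) * x^n) sums (Q/x - 2*Q - P)"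
    by (intro sums_diff a b P)
  moreover have "(\<lambda>n. bb (Suc n) k * x^(Suc n) / x - 2 * (bb n k * x^n) - bb n (k-1) * x^n) = (\<lambda>n. bb n (k+1) * x^n)"
    using x by (auto simp: fun_eq_iff bb_rec[OF k] field_simps)
  ultimately show ?thesis by simp
qed

lemma pos_sums: "(\<lambda>n. bb n k * (1/4)^n) sums 1"
proof -
  have "(\<lambda>n. bb n k * (1/4)^n) sums 1 \<and> (\<lambda>n. bb n (Suc k) * (1/4)^n) sums 1"
  proof (induction k)
    case 0
    then show ?case using bb0_sums cat_sums by simp
  next
    case (Suc k)
    have "(\<lambda>n. bb n (Suc k + 1) * (1/4)^n) sums (1/(1/4) - 2*1 - 1)"
      by (rule step_sums) (use Suc in auto)
    then show ?case using Suc by simp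
  qed
  then show ?thesis by simp
qed

lemma neg_summable: "summable (\<lambda>n. norm (bb n k * (-1/4)^n))"
proof -
  have "(\<lambda>n. norm (bb n k * (-1/4)^n)) = (\<lambda>n. bb n k * (1/4)^n)"
    by (auto simp: fun_eq_iff abs_mult power_abs bb_nonneg)
  then show ?thesis using sums_summable[OF pos_sums[of k]] by simp
qed

definition Fm :: "nat \<Rightarrow> real" where "Fm k = (\<Sum>n. bb n k * (-1/4)^n)"

lemma Fm_sums: "(\<lambda>n. bb n k * (-1/4)^n) sums Fm k"
  unfolding Fm_def by (rule summable_sums[OF summable_norm_cancel[OF neg_summable]])

lemma Fm_bound: "\<bar>Fm k\<bar> \<le> 1"
proof -
  have "norm (Fm k) \<le> (\<Sum>n. norm (bb n k * (-1/4)^n))"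
    unfolding Fm_def by (rule summable_norm[OF neg_summable])
  also have "(\<lambda>n. norm (bb n k * (-1/4)^n)) = (\<lambda>n. bb n k * (1/4)^n)"
    by (auto simp: fun_eq_iff abs_mult power_abs bb_nonneg)
  also have "(\<Sum>n. bb n k * (1/4)^n) = 1" using pos_sums sums_unique by metis
  finally show ?thesis by simp
qed

lemma Fm0: "Fm 0 = 1"
  using bb0_sums Fm_sums sums_unique2 by blast

lemma Fm_rec: "Fm (Suc (Suc k)) = -6 * Fm (Suc k) - Fm k"
proof -
  have "(\<lambda>n. bb n (Suc k + 1) * (-1/4)^n) sums (Fm (Suc k)/(-1/4) - 2 * Fm (Suc k) - Fm (Suc k - 1))"
    by (rule step_sums, simp, simp, simp only: diff_Suc_1, rule Fm_sums, rule Fm_sums)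
  then have "Fm (Suc k + 1) = Fm (Suc k)/(-1/4) - 2 * Fm (Suc k) - Fm (Suc k - 1)"
    by (rule sums_unique2[OF Fm_sums])
  then show ?thesis by simp
qed

lemma sqrt2_sq: "sqrt 2 * sqrt 2 = (2::real)" by simp

lemma Fm_closed: "Fm k = (2 * sqrt 2 - 3) ^ k"
proof -
  define r :: real where "r = 2 * sqrt 2 - 3"
  define s :: real where "s = -3 - 2 * sqrt 2"
  define G where "G k = Fm (Suc k) - r * Fm k" for k
  have rs: "r * s = 1" "-6 - r = s" unfolding r_def s_def by (simp_all add: algebra_simps)
  have GS: "G (Suc k) = s * G k" for k
  proof -
    have "G (Suc k) = -6 * Fm (Suc k) - Fm k - r * Fm (Suc k)" unfolding G_def Fm_rec by simp
    also have "\<dots> = (-6 - r) * Fm (Suc k) - 1 * Fm k" by (simp add: algebra_simps)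
    also have "\<dots> = s * Fm (Suc k) - (r * s) * Fm k" by (simp only: rs)
    also have "\<dots> = s * G k" unfolding G_def by (simp add: algebra_simps)
    finally show ?thesis .
  qed
  have Gp: "G k = s^k * G 0" for k by (induction k) (simp_all add: GS)
  have s2: "sqrt 2 > 1" by simp
  have rabs: "\<bar>r\<bar> \<le> 1"
  proof -
    have "sqrt 2 < 3/2" by (rule real_less_lsqrt) (auto simp: power2_eq_square)
    then show ?thesis using s2 unfolding r_def by simp
  qed
  have Gb: "\<bar>G k\<bar> \<le> 2" for k
  proof -
    have "\<bar>G k\<bar> \<le> \<bar>Fm (Suc k)\<bar> + \<bar>r\<bar> * \<bar>Fm k\<bar>" unfolding G_def by (simp add: abs_mult[symmetric] abs_triangle_ineq4)
    also have "\<dots> \<le> 1 + 1 * 1" by (intro add_mono mult_mono Fm_bound rabs) auto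
    finally show ?thesis by simp
  qed
  have G0: "G 0 = 0"
  proof (rule ccontr)
    assume "G 0 \<noteq> 0"
    then have g0: "\<bar>G 0\<bar> > 0" by simp
    have "s < -1" unfolding s_def using s2 by (simp only: diff_less_eq)
    then have "\<bar>s\<bar> > 1" by simp
    then obtain n where n: "2 / \<bar>G 0\<bar> < \<bar>s\<bar>^n" using real_arch_pow by blast
    then have "2 < \<bar>s\<bar>^n * \<bar>G 0\<bar>" using g0 by (simp add: field_simps)
    also have "\<dots> = \<bar>G n\<bar>" by (simp only: Gp[of n] abs_mult power_abs)
    finally show False using Gb[of n] by simp
  qed
  have "Fm (Suc k) = r * Fm k" for k using Gp[of k] G0 unfolding G_def by simp
  then have "Fm k = r ^ k" for k by (induction k) (simp_all add: Fm0)
  then show ?thesis unfolding r_def .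
qed


lemma shift_sums:
  assumes S: "(\<lambda>n. bb n k * x^n) sums S" and m: "m \<le> k"
  shows "(\<lambda>n. bb (n+m) k * x^(n+m)) sums S"
proof -
  have "(\<Sum>i<m. bb i k * x^i) = 0" using m by (simp add: bb_zero)
  then show ?thesis using S by (subst sums_iff_shift) simp
qed

lemma B_sums:
  assumes S: "(\<lambda>n. bb n k * x^n) sums S" and k: "k \<ge> 1"
  shows "(\<lambda>n. catB (n+k) k * x^(n+k)) sums S"
proof -
  have "(\<lambda>n. bb (n+k) k * x^(n+k)) = (\<lambda>n. catB (n+k) k * x^(n+k))"
    using k by (auto simp: fun_eq_iff bb_eq)
  then show ?thesis using shift_sums[OF S order_refl] by simp
qed

lemma A_sums:
  assumes S: "(\<lambda>n. bb n k * x^n) sums S" and T: "(\<lambda>n. bb n (k+1) * x^n) sums T"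
  shows "(\<lambda>n. catA (n+k) (k+1) * x^(n+k)) sums (S + T)"
proof -
  have "(\<lambda>n. bb (n+k) k * x^(n+k) + bb (n+k) (k+1) * x^(n+k)) sums (S + T)"
    by (intro sums_add shift_sums[OF S] shift_sums[OF T]) auto
  moreover have "(\<lambda>n. bb (n+k) k * x^(n+k) + bb (n+k) (k+1) * x^(n+k)) = (\<lambda>n. catA (n+k) (k+1) * x^(n+k))"
  proof
    fix n
    have "catA (n+k) (k+1) = bb (n+k) k + bb (n+k) (k+1)" by (rule catA_bb) simp
    then show "bb (n+k) k * x^(n+k) + bb (n+k) (k+1) * x^(n+k) = catA (n+k) (k+1) * x^(n+k)"
      by (simp add: algebra_simps)
  qed
  ultimately show ?thesis by simp
qed

lemma neg4: "(- (1/4::real))^m = (-1)^m / 4^m"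
  by (induction m) auto

lemma P1: "k \<ge> 1 \<Longrightarrow> (\<lambda>n. catB (n+k) k / 4 ^ (n+k)) sums 1"
  using B_sums[OF pos_sums] by (simp add: power_divide)

lemma P2: "k \<ge> 1 \<Longrightarrow> (\<lambda>n. catB (n+k) k * (-1) ^ (n+k) / 4 ^ (n+k)) sums ((2 * sqrt 2 - 3) ^ k)"
  using B_sums[OF Fm_sums, of k] unfolding Fm_closed by (simp add: neg4)

lemma P3: "(\<lambda>n. catA (n+k) (k+1) / 4 ^ (n+k)) sums 2"
  using A_sums[OF pos_sums pos_sums, of k] by (simp add: power_divide)

lemma P4: "(\<lambda>n. catA (n+k) (k+1) * (-1) ^ (n+k) / 4 ^ (n+k)) sums (2 * (sqrt 2 - 1) * (2 * sqrt 2 - 3) ^ k)"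
proof -
  have "(\<lambda>n. catA (n+k) (k+1) * (-1/4) ^ (n+k)) sums ((2 * sqrt 2 - 3) ^ k + (2 * sqrt 2 - 3) ^ (k+1))"
    using A_sums[OF Fm_sums Fm_sums, of k] unfolding Fm_closed .
  moreover have "(2 * sqrt 2 - 3) ^ k + (2 * sqrt 2 - 3) ^ (k+1) = 2 * (sqrt 2 - 1) * (2 * sqrt 2 - 3) ^ k"
    by (simp add: algebra_simps)
  ultimately show ?thesis by (simp add: neg4)
qed

lemma sq2: "sqrt 2 * sqrt 2 = (2::real)" by simp

theorem lemma2p2:
  shows "(\<forall>k::nat. k \<ge> 1 \<longrightarrow>
      (\<lambda>n. catB (n+k) k / 4 ^ (n+k)) sums 1
    \<and> (\<lambda>n. catB (n+k) k * (-1) ^ (n+k) / 4 ^ (n+k)) sums ((2 * sqrt 2 - 3) ^ k)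
    \<and> (\<lambda>n. catA (n+k) (k+1) / 4 ^ (n+k)) sums 2
    \<and> (\<lambda>n. catA (n+k) (k+1) * (-1) ^ (n+k) / 4 ^ (n+k))
         sums (2 * (sqrt 2 - 1) * (2 * sqrt 2 - 3) ^ k))
    \<and> (\<lambda>j. \<Sum>n. catB (n + (j+1)) (j+1) / 4 ^ (n + (j+1) + (j+1))) sums (1/3)
    \<and> (\<lambda>j. \<Sum>n. catB (n + (j+1)) (j+1) * (-1) ^ (n + (j+1)) / 4 ^ (n + (j+1) + (j+1)))
           sums ((8 * sqrt 2 - 13) / 41)
    \<and> (\<lambda>k. \<Sum>n. catA (n+k) (k+1) / 4 ^ (n+k+k)) sums (8/3)
    \<and> (\<lambda>k. \<Sum>n. catA (n+k) (k+1) * (-1) ^ (n+k) / 4 ^ (n+k+k))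
           sums (8/41 * (5 * sqrt 2 - 3))"
proof -
  define r :: real where "r = 2 * sqrt 2 - 3"
  have s2: "sqrt 2 > 1" "sqrt 2 < 3/2"
    by simp (rule real_less_lsqrt, auto simp: power2_eq_square)
  have "-4 < r" using s2 unfolding r_def by linarith
  moreover have "r < 4" using s2 unfolding r_def by linarith
  ultimately have rb: "norm (r / 4) < 1" by (auto simp: abs_less_iff field_simps)
  have q: "norm (1 / 4 :: real) < 1" by simp
  have E5: "(\<Sum>n. catB (n + (j+1)) (j+1) / 4 ^ (n + (j+1) + (j+1))) = (1/4) * (1/4)^j" for j
  proof -
    have "(\<lambda>n. catB (n + (j+1)) (j+1) / 4 ^ (n + (j+1)) / 4^(j+1)) sums (1 / 4^(j+1))"
      by (intro sums_divide P1) simp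
    then show ?thesis by (simp add: sums_iff power_add power_divide mult_ac)
  qed
  have E6: "(\<Sum>n. catB (n + (j+1)) (j+1) * (-1) ^ (n + (j+1)) / 4 ^ (n + (j+1) + (j+1))) = (r/4) * (r/4)^j" for j
  proof -
    have "(\<lambda>n. catB (n + (j+1)) (j+1) * (-1) ^ (n + (j+1)) / 4 ^ (n + (j+1)) / 4^(j+1)) sums (r^(j+1) / 4^(j+1))"
      unfolding r_def by (intro sums_divide P2) simp
    then show ?thesis by (simp add: sums_iff power_add power_divide mult_ac)
  qed
  have E7: "(\<Sum>n. catA (n+k) (k+1) / 4 ^ (n+k+k)) = 2 * (1/4)^k" for k
  proof -
    have "(\<lambda>n. catA (n+k) (k+1) / 4 ^ (n+k) / 4^k) sums (2 / 4^k)"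
      by (intro sums_divide P3)
    then show ?thesis by (simp add: sums_iff power_add power_divide mult_ac)
  qed
  have E8: "(\<Sum>n. catA (n+k) (k+1) * (-1) ^ (n+k) / 4 ^ (n+k+k)) = 2 * (sqrt 2 - 1) * (r/4)^k" for k
  proof -
    have "(\<lambda>n. catA (n+k) (k+1) * (-1) ^ (n+k) / 4 ^ (n+k) / 4^k) sums (2 * (sqrt 2 - 1) * r ^ k / 4^k)"
      unfolding r_def by (intro sums_divide P4)
    then show ?thesis by (simp add: sums_iff power_add power_divide mult_ac)
  qed
  have G1: "(\<lambda>j. (1/4::real)^j) sums (4/3)" using geometric_sums[OF q] by simp
  have Gr: "(\<lambda>j. (r/4)^j) sums (1 / (1 - r/4))" using geometric_sums[OF rb] .
  have d: "7 - 2 * sqrt 2 \<noteq> 0" using s2 by simp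
  have v6: "r/4 * (1 / (1 - r/4)) = (8 * sqrt 2 - 13) / 41"
    unfolding r_def using d by (simp add: field_simps)
  have v8: "2 * (sqrt 2 - 1) * (1 / (1 - r/4)) = 8/41 * (5 * sqrt 2 - 3)"
    unfolding r_def using d by (simp add: field_simps)
  show ?thesis
  proof (intro conjI allI impI)
    fix k :: nat assume "k \<ge> 1"
    then show "(\<lambda>n. catB (n+k) k / 4 ^ (n+k)) sums 1"
      "(\<lambda>n. catB (n+k) k * (-1) ^ (n+k) / 4 ^ (n+k)) sums ((2 * sqrt 2 - 3) ^ k)"
      by (simp_all add: P1 P2)
    show "(\<lambda>n. catA (n+k) (k+1) / 4 ^ (n+k)) sums 2" by (rule P3)
    show "(\<lambda>n. catA (n+k) (k+1) * (-1) ^ (n+k) / 4 ^ (n+k)) sums (2 * (sqrt 2 - 1) * (2 * sqrt 2 - 3) ^ k)"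
      by (rule P4)
  next
    show "(\<lambda>j. \<Sum>n. catB (n + (j+1)) (j+1) / 4 ^ (n + (j+1) + (j+1))) sums (1/3)"
      unfolding E5 using sums_mult[OF G1, of "1/4"] by simp
  next
    show "(\<lambda>j. \<Sum>n. catB (n + (j+1)) (j+1) * (-1) ^ (n + (j+1)) / 4 ^ (n + (j+1) + (j+1))) sums ((8 * sqrt 2 - 13) / 41)"
      unfolding E6 v6[symmetric] by (rule sums_mult[OF Gr])
  next
    show "(\<lambda>k. \<Sum>n. catA (n+k) (k+1) / 4 ^ (n+k+k)) sums (8/3)"
      unfolding E7 using sums_mult[OF G1, of 2] by simp
  next
    show "(\<lambda>k. \<Sum>n. catA (n+k) (k+1) * (-1) ^ (n+k) / 4 ^ (n+k+k)) sums (8/41 * (5 * sqrt 2 - 3))"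
      unfolding E8 v8[symmetric] by (rule sums_mult[OF Gr])
  qed
qed

end
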